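(* Let $l,u$ be integers with $0<l\le u<K$ and $\Pi=\Pi_{l,u}$. Let $\chi^\circ$ be any of the three procedures $\hat\chi,\tilde\chi,\check\chi$ (with some fixed thresholds) and suppose that $\mathrm{FWE}^i_A(\chi^\circ)\le1/2$ for $i\in\{1,2\}$ and all $A\in\Pi_{l,u}$. Then, for $i\in\{1,2\}$ and every $A\in\Pi_{l,u}$, $$\mathrm{pFDR}^i_A(\chi^\circ)\le 2\,\mathrm{FWE}^i_A(\chi^\circ),$$ and $$\mathrm{pFDR}^i_A(\chi)\ge\frac1K\,\mathrm{FWE}^i_A(\chi)\quad\text{for every procedure }\chi.$$
   Context: Let $K\ge2$, $[K]=\{1,\dots,K\}$, $\mathbb N=\{1,2,\dots\}$. There are $K$ independent data streams $X_k=\{X_k(n):n\in\mathbb N\}$; $\mathcal F_k(n)=\sigma(X_k(t):t\le n)$, $\mathcal F(n)=\sigma(\mathcal F_k(n):k\in[K])$. For each $k$, $\mathrm P_k^0,\mathrm P_k^1$ are distributions of $X_k$ mutually absolutely continuous on each $\mathcal F_k(n)$, $\lambda_k(n)=\log\frac{d\mathrm P_k^1}{d\mathrm P_k^0}(\mathcal F_k(n))$. For $A\subseteq[K]$, $\mathrm P_A$ is the joint law with independent streams, $X_k\sim\mathrm P_k^1$ if $k\in A$, $\mathrm P_k^0$ otherwise; $\mathrm E_A$ its expectation. $\Pi_{l,u}=\{A\subseteq[K]:l\le|A|\le u\}$. $\lambda_{(1)}(n)\ge\dots\ge\lambda_{(K)}(n)$ are the ordered LLRs, $p(n)=|\{k:\lambda_k(n)>0\}|$.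 A procedure $\chi=(\mathbf T,\mathbf D)$: $\mathbb N$-valued stopping times $T_k$ w.r.t. $\{\mathcal F(n)\}$ and $\mathcal F(T_k)$-measurable Bernoulli $D_k$; $\mathbf D=\{k:D_k=1\}$. $\mathrm{FWE}^1_A(\chi)=\mathrm P_A(\mathbf D\setminus A\ne\emptyset)$, $\mathrm{FWE}^2_A(\chi)=\mathrm P_A(A\setminus\mathbf D\ne\emptyset)$. Positive false discovery / non-discovery rates: $\mathrm{pFDR}^1_A(\chi)=\mathrm E_A\big[\frac{|\mathbf D\setminus A|}{|\mathbf D|}\,\big|\,|\mathbf D|\ge1\big]$, $\mathrm{pFDR}^2_A(\chi)=\mathrm E_A\big[\frac{|A\setminus\mathbf D|}{K-|\mathbf D|}\,\big|\,K-|\mathbf D|\ge1\big]$. The three procedures (thresholds $a,b,c,d>0$): parallel SPRT $\tilde\chi$: $\tilde T_k=\inf\{n:\lambda_k(n)\notin(-b,a)\}$, $\tilde D_k=\mathbf 1\{\lambda_k(\tilde T_k)\ge a\}$. Proposed $\hat\chi$: $\hat T_k=\hat T_{k,1}\wedge\hat T_{k,2}$, $\hat D_k=1$ iff $\hat T_k=\hat T_{k,1}$, where if $l=u\equiv m$, $\hat T_{k,1}=\inf\{n:\lambda_k(n)\ge\lambda_{(m+1)}(n)+c\}$, $\hat T_{k,2}=\inf\{n:\lambda_k(n)\le\lambda_{(m)}(n)-d\}$, and if $l<u$, $\hat T_{k,1}=\inf\{n:\lambda_k(n)\ge\min\{a,\lambda_{(l+1)}(n)+c\}\}$, $\hat T_{k,2}=\inf\{n:\lambda_k(n)\le\max\{-b,\lambda_{(u)}(n)-d\}\}$.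 Synchronous $\check\chi$: common time $\check T$; if $l=u\equiv m$, $\check T=\inf\{n:\lambda_{(m)}(n)-\lambda_{(m+1)}(n)\ge c\vee d\}$ with the $m$ largest-LLR streams declared signals; if $l<u$, $\check T=\tau_1\wedge\tau_2\wedge\tau_3$, $\tau_1=\inf\{n:\lambda_{(l+1)}(n)\le\min\{-b,-c+\lambda_{(l)}(n)\}\}$, $\tau_2=\inf\{n:\lambda_k(n)\notin(-b,a)\ \forall k,\ l\le p(n)\le u\}$, $\tau_3=\inf\{n:\lambda_{(u)}(n)\ge\max\{a,d+\lambda_{(u+1)}(n)\}\}$, with the $(p(\check T)\vee l)\wedge u$ largest-LLR streams declared signals. *)

theory Defs
  imports "HOL-Probability.Probability"
begin

text \<open>A stream path is a function
  nat => 'a; the observation at time t (t = 1,2,...) is the coordinate t (coordinate 0 is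
  never observed). The joint outcome is a function from the stream index set [K] = {1..K}
  to stream paths.\<close>

definition path_space :: "'a measure \<Rightarrow> (nat \<Rightarrow> 'a) measure" where
  "path_space M = PiM UNIV (\<lambda>_. M)"

definition trunc :: "nat \<Rightarrow> (nat \<Rightarrow> 'a) \<Rightarrow> (nat \<Rightarrow> 'a)" where
  "trunc n x = restrict x {1..n}"

definition trunc_space :: "'a measure \<Rightarrow> nat \<Rightarrow> (nat \<Rightarrow> 'a) measure" where
  "trunc_space M n = PiM {1..n} (\<lambda>_. M)"

definition trunc_law :: "'a measure \<Rightarrow> nat \<Rightarrow> (nat \<Rightarrow> 'a) measure \<Rightarrow> (nat \<Rightarrow> 'a) measure" where
  "trunc_law M n Q = distr Q (trunc_space M n) (trunc n)"

definition stream_model ::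
  "'a measure \<Rightarrow> nat \<Rightarrow> (nat \<Rightarrow> (nat \<Rightarrow> 'a) measure) \<Rightarrow> (nat \<Rightarrow> (nat \<Rightarrow> 'a) measure) \<Rightarrow> bool" where
  "stream_model M K P0 P1 \<longleftrightarrow>
     (\<forall>k\<in>{1..K}. prob_space (P0 k) \<and> prob_space (P1 k) \<and>
        sets (P0 k) = sets (path_space M) \<and> sets (P1 k) = sets (path_space M) \<and>
        (\<forall>n\<ge>1. absolutely_continuous (trunc_law M n (P0 k)) (trunc_law M n (P1 k)) \<and>
                absolutely_continuous (trunc_law M n (P1 k)) (trunc_law M n (P0 k))))"

text \<open>Log-likelihood ratio lambda_k(n) = log dP1/dP0 on F_k(n), evaluated at a path.\<close>
definition llr ::
  "'a measure \<Rightarrow> (nat \<Rightarrow> (nat \<Rightarrow> 'a) measure) \<Rightarrow> (nat \<Rightarrow> (nat \<Rightarrow> 'a) measure)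
     \<Rightarrow> nat \<Rightarrow> nat \<Rightarrow> (nat \<Rightarrow> 'a) \<Rightarrow> real" where
  "llr M P0 P1 k n x =
     ln (enn2real (RN_deriv (trunc_law M n (P0 k)) (trunc_law M n (P1 k)) (trunc n x)))"

type_synonym 'a outcome = "nat \<Rightarrow> nat \<Rightarrow> 'a"

definition joint_space :: "'a measure \<Rightarrow> nat \<Rightarrow> 'a outcome measure" where
  "joint_space M K = PiM {1..K} (\<lambda>_. path_space M)"

definition PA ::
  "nat \<Rightarrow> (nat \<Rightarrow> (nat \<Rightarrow> 'a) measure) \<Rightarrow> (nat \<Rightarrow> (nat \<Rightarrow> 'a) measure) \<Rightarrow> nat set
     \<Rightarrow> 'a outcome measure" where
  "PA K P0 P1 A = PiM {1..K} (\<lambda>k. if k \<in> A then P1 k else P0 k)"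

definition filt :: "'a measure \<Rightarrow> nat \<Rightarrow> nat \<Rightarrow> 'a outcome measure" where
  "filt M K n = vimage_algebra (space (joint_space M K))
      (\<lambda>\<omega>. restrict (\<lambda>k. trunc n (\<omega> k)) {1..K})
      (PiM {1..K} (\<lambda>_. trunc_space M n))"

definition Lam ::
  "'a measure \<Rightarrow> (nat \<Rightarrow> (nat \<Rightarrow> 'a) measure) \<Rightarrow> (nat \<Rightarrow> (nat \<Rightarrow> 'a) measure)
     \<Rightarrow> nat \<Rightarrow> nat \<Rightarrow> 'a outcome \<Rightarrow> real" where
  "Lam M P0 P1 k n \<omega> = llr M P0 P1 k n (\<omega> k)"

definition ostat :: "nat \<Rightarrow> (nat \<Rightarrow> real) \<Rightarrow> nat \<Rightarrow> real" where
  "ostat K f j = rev (sort (map f [1..<K+1])) ! (j - 1)"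

definition npos :: "nat \<Rightarrow> (nat \<Rightarrow> real) \<Rightarrow> nat" where
  "npos K f = card {k\<in>{1..K}. f k > 0}"

definition top :: "nat \<Rightarrow> (nat \<Rightarrow> real) \<Rightarrow> nat \<Rightarrow> nat set" where
  "top K f j = {k\<in>{1..K}. f k \<ge> ostat K f j}"

definition hit :: "(nat \<Rightarrow> bool) \<Rightarrow> enat" where
  "hit P = (if \<exists>n\<ge>1. P n then enat (LEAST n. n \<ge> 1 \<and> P n) else \<infinity>)"

definition Pi_lu :: "nat \<Rightarrow> nat \<Rightarrow> nat \<Rightarrow> nat set set" where
  "Pi_lu K l u = {A. A \<subseteq> {1..K} \<and> l \<le> card A \<and> card A \<le> u}"

definition is_procedure ::
  "'a measure \<Rightarrow> nat \<Rightarrow> (nat \<Rightarrow> 'a outcome \<Rightarrow> nat) \<Rightarrow> (nat \<Rightarrow> 'a outcome \<Rightarrow> bool) \<Rightarrow> bool" where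
  "is_procedure M K T D \<longleftrightarrow>
     (\<forall>k\<in>{1..K}. (\<forall>\<omega>\<in>space (joint_space M K). T k \<omega> \<ge> 1) \<and>
        stopping_time (filt M K) (T k) \<and>
        Measurable.pred (filtration.pre_sigma (space (joint_space M K)) (filt M K) (T k)) (D k))"

definition Dset :: "nat \<Rightarrow> (nat \<Rightarrow> 'a outcome \<Rightarrow> bool) \<Rightarrow> 'a outcome \<Rightarrow> nat set" where
  "Dset K D \<omega> = {k\<in>{1..K}. D k \<omega>}"

definition sprt_T :: "'a measure \<Rightarrow> _ \<Rightarrow> _ \<Rightarrow> real \<Rightarrow> real \<Rightarrow> nat \<Rightarrow> 'a outcome \<Rightarrow> enat" where
  "sprt_T M P0 P1 a b k \<omega> = hit (\<lambda>n. Lam M P0 P1 k n \<omega> \<notin> {-b<..<a})"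

definition sprt_D :: "'a measure \<Rightarrow> _ \<Rightarrow> _ \<Rightarrow> real \<Rightarrow> real \<Rightarrow> nat \<Rightarrow> 'a outcome \<Rightarrow> bool" where
  "sprt_D M P0 P1 a b k \<omega> =
     (case sprt_T M P0 P1 a b k \<omega> of enat n \<Rightarrow> Lam M P0 P1 k n \<omega> \<ge> a | \<infinity> \<Rightarrow> False)"

definition hat_T1 :: "'a measure \<Rightarrow> _ \<Rightarrow> _ \<Rightarrow> nat \<Rightarrow> nat \<Rightarrow> nat \<Rightarrow> real \<Rightarrow> real \<Rightarrow> real \<Rightarrow> real
     \<Rightarrow> nat \<Rightarrow> 'a outcome \<Rightarrow> enat" where
  "hat_T1 M P0 P1 K l u a b c d k \<omega> =
     (if l = u then hit (\<lambda>n. Lam M P0 P1 k n \<omega> \<ge> ostat K (\<lambda>j. Lam M P0 P1 j n \<omega>) (l + 1) + c)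
      else hit (\<lambda>n. Lam M P0 P1 k n \<omega> \<ge> min a (ostat K (\<lambda>j. Lam M P0 P1 j n \<omega>) (l + 1) + c)))"

definition hat_T2 :: "'a measure \<Rightarrow> _ \<Rightarrow> _ \<Rightarrow> nat \<Rightarrow> nat \<Rightarrow> nat \<Rightarrow> real \<Rightarrow> real \<Rightarrow> real \<Rightarrow> real
     \<Rightarrow> nat \<Rightarrow> 'a outcome \<Rightarrow> enat" where
  "hat_T2 M P0 P1 K l u a b c d k \<omega> =
     (if l = u then hit (\<lambda>n. Lam M P0 P1 k n \<omega> \<le> ostat K (\<lambda>j. Lam M P0 P1 j n \<omega>) u - d)
      else hit (\<lambda>n. Lam M P0 P1 k n \<omega> \<le> max (-b) (ostat K (\<lambda>j. Lam M P0 P1 j n \<omega>) u - d)))"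

definition hat_D :: "'a measure \<Rightarrow> _ \<Rightarrow> _ \<Rightarrow> nat \<Rightarrow> nat \<Rightarrow> nat \<Rightarrow> real \<Rightarrow> real \<Rightarrow> real \<Rightarrow> real
     \<Rightarrow> nat \<Rightarrow> 'a outcome \<Rightarrow> bool" where
  "hat_D M P0 P1 K l u a b c d k \<omega> =
     (min (hat_T1 M P0 P1 K l u a b c d k \<omega>) (hat_T2 M P0 P1 K l u a b c d k \<omega>)
        = hat_T1 M P0 P1 K l u a b c d k \<omega>)"

definition check_T :: "'a measure \<Rightarrow> _ \<Rightarrow> _ \<Rightarrow> nat \<Rightarrow> nat \<Rightarrow> nat \<Rightarrow> real \<Rightarrow> real \<Rightarrow> real \<Rightarrow> real
     \<Rightarrow> 'a outcome \<Rightarrow> enat" where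
  "check_T M P0 P1 K l u a b c d \<omega> =
     (let L = (\<lambda>n j. Lam M P0 P1 j n \<omega>) in
      if l = u then hit (\<lambda>n. ostat K (L n) l - ostat K (L n) (l + 1) \<ge> max c d)
      else min (hit (\<lambda>n. ostat K (L n) (l + 1) \<le> min (-b) (-c + ostat K (L n) l)))
           (min (hit (\<lambda>n. (\<forall>k\<in>{1..K}. L n k \<notin> {-b<..<a}) \<and> l \<le> npos K (L n) \<and> npos K (L n) \<le> u))
                (hit (\<lambda>n. ostat K (L n) u \<ge> max a (d + ostat K (L n) (u + 1))))))"

definition check_D :: "'a measure \<Rightarrow> _ \<Rightarrow> _ \<Rightarrow> nat \<Rightarrow> nat \<Rightarrow> nat \<Rightarrow> real \<Rightarrow> real \<Rightarrow> real \<Rightarrow> real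
     \<Rightarrow> nat \<Rightarrow> 'a outcome \<Rightarrow> bool" where
  "check_D M P0 P1 K l u a b c d k \<omega> =
     (case check_T M P0 P1 K l u a b c d \<omega> of
        enat n \<Rightarrow> (let L = (\<lambda>j. Lam M P0 P1 j n \<omega>) in
                   if l = u then k \<in> top K L l
                   else k \<in> top K L (min (max (npos K L) l) u))
      | \<infinity> \<Rightarrow> False)"

definition FWE1 :: "'a outcome measure \<Rightarrow> nat set \<Rightarrow> ('a outcome \<Rightarrow> nat set) \<Rightarrow> real" where
  "FWE1 P A Ds = measure P {\<omega>\<in>space P. Ds \<omega> - A \<noteq> {}}"

definition FWE2 :: "'a outcome measure \<Rightarrow> nat set \<Rightarrow> ('a outcome \<Rightarrow> nat set) \<Rightarrow> real" where
  "FWE2 P A Ds = measure P {\<omega>\<in>space P. A - Ds \<omega> \<noteq> {}}"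

text \<open>Conditional expectation E[X | B] written as E[X 1_B] / P(B) (0 if P(B) = 0).\<close>
definition pFDR1 :: "'a outcome measure \<Rightarrow> nat set \<Rightarrow> ('a outcome \<Rightarrow> nat set) \<Rightarrow> real" where
  "pFDR1 P A Ds =
     (\<integral>\<omega>. (if card (Ds \<omega>) \<ge> 1 then real (card (Ds \<omega> - A)) / real (card (Ds \<omega>)) else 0) \<partial>P)
     / measure P {\<omega>\<in>space P. card (Ds \<omega>) \<ge> 1}"

definition pFDR2 :: "nat \<Rightarrow> 'a outcome measure \<Rightarrow> nat set \<Rightarrow> ('a outcome \<Rightarrow> nat set) \<Rightarrow> real" where
  "pFDR2 K P A Ds =
     (\<integral>\<omega>. (if real K - real (card (Ds \<omega>)) \<ge> 1
           then real (card (A - Ds \<omega>)) / (real K - real (card (Ds \<omega>))) else 0) \<partial>P)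
     / measure P {\<omega>\<in>space P. real K - real (card (Ds \<omega>)) \<ge> 1}"

end

theory Submission
  imports Defs
begin

lemma Dset_meas:
  assumes "\<And>k. k \<in> {1..K} \<Longrightarrow> Measurable.pred P (D k)"
  shows "Dset K D \<in> measurable P (count_space (Pow {1..K}))"
proof (rule measurable_count_space_eq_countable[THEN iffD2])
  show "countable (Pow {1..K})" by (simp add: countable_finite)
next
  show "Dset K D \<in> space P \<rightarrow> Pow {1..K} \<and> (\<forall>a\<in>Pow {1..K}. Dset K D -` {a} \<inter> space P \<in> sets P)"
  proof (intro conjI ballI)
  show "Dset K D \<in> space P \<rightarrow> Pow {1..K}" by (auto simp: Dset_def)
  fix S assume "S \<in> Pow {1..K}"
  have eqv: "Dset K D \<omega> = S \<longleftrightarrow> (\<forall>k\<in>{1..K}. D k \<omega> \<longleftrightarrow> k \<in> S)" for \<omega>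
    using \<open>S \<in> Pow {1..K}\<close> unfolding Dset_def by blast
  have "Dset K D -` {S} \<inter> space P = {\<omega>\<in>space P. \<forall>k\<in>{1..K}. D k \<omega> \<longleftrightarrow> k \<in> S}"
    using eqv by blast
  also have "\<dots> \<in> sets P"
  proof -
    have "Measurable.pred P (\<lambda>\<omega>. \<forall>k\<in>{1..K}. D k \<omega> \<longleftrightarrow> k \<in> S)"
    proof (rule pred_intros_finite(3))
      fix k assume k: "k \<in> {1..K}"
      show "Measurable.pred P (\<lambda>\<omega>. D k \<omega> \<longleftrightarrow> k \<in> S)"
        using assms[OF k] by (cases "k \<in> S") (auto intro: pred_intros_logic)
    qed simp
    then show ?thesis by (simp add: pred_def)
  qed
  finally show "Dset K D -` {S} \<inter> space P \<in> sets P" .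
qed
qed

lemma Dset_fun_meas:
  assumes "\<And>k. k \<in> {1..K} \<Longrightarrow> Measurable.pred P (D k)"
  shows "(\<lambda>\<omega>. h (Dset K D \<omega>)) \<in> borel_measurable P"
  using measurable_comp[OF Dset_meas[OF assms] borel_measurable_count_space]
  by (simp add: comp_def)

lemma Dset_set_meas:
  assumes "\<And>k. k \<in> {1..K} \<Longrightarrow> Measurable.pred P (D k)"
  shows "{\<omega>\<in>space P. Q (Dset K D \<omega>)} \<in> sets P"
proof -
  have "(\<lambda>\<omega>. of_bool (Q (Dset K D \<omega>)) :: real) \<in> borel_measurable P"
    by (rule Dset_fun_meas[OF assms])
  then have "Measurable.pred P (\<lambda>\<omega>. (of_bool (Q (Dset K D \<omega>)) :: real) = 1)"
    by measurable
  then show ?thesis by (simp add: pred_def)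
qed

lemma Dset_sub: "Dset K D \<omega> \<subseteq> {1..K}" by (auto simp: Dset_def)

lemma pFDR1_upper:
  assumes P: "prob_space P" and D: "\<And>k. k \<in> {1..K} \<Longrightarrow> Measurable.pred P (D k)"
    and A: "A \<noteq> {}" and f2: "FWE2 P A (Dset K D) \<le> 1/2"
  shows "pFDR1 P A (Dset K D) \<le> 2 * FWE1 P A (Dset K D)"
proof -
  interpret prob_space P by fact
  let ?Ds = "Dset K D"
  define f where "f = (\<lambda>\<omega>. if card (?Ds \<omega>) \<ge> 1 then real (card (?Ds \<omega> - A)) / real (card (?Ds \<omega>)) else 0)"
  define E1 where "E1 = {\<omega>\<in>space P. ?Ds \<omega> - A \<noteq> {}}"
  define E2 where "E2 = {\<omega>\<in>space P. A - ?Ds \<omega> \<noteq> {}}"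
  define Q where "Q = {\<omega>\<in>space P. card (?Ds \<omega>) \<ge> 1}"
  have fin: "finite (?Ds \<omega>)" for \<omega> by (rule finite_subset[OF Dset_sub]) simp
  have fm: "f \<in> borel_measurable P" unfolding f_def by (rule Dset_fun_meas[OF D])
  have E1m: "E1 \<in> sets P" unfolding E1_def by (rule Dset_set_meas[OF D])
  have E2m: "E2 \<in> sets P" unfolding E2_def by (rule Dset_set_meas[OF D])
  have Qm: "Q \<in> sets P" unfolding Q_def by (rule Dset_set_meas[OF D])
  have f01: "0 \<le> f \<omega> \<and> f \<omega> \<le> indicator E1 \<omega>" if "\<omega> \<in> space P" for \<omega>
  proof (cases "?Ds \<omega> - A = {}")
    case True
    then have "card (?Ds \<omega> - A) = 0" by (metis card.empty)
    then show ?thesis by (simp add: f_def indicator_def)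
  next
    case False
    then have "card (?Ds \<omega> - A) \<le> card (?Ds \<omega>)" using fin by (intro card_mono) auto
    then show ?thesis using False that by (auto simp: f_def E1_def divide_le_eq_1)
  qed
  have int: "integrable P f"
  proof (rule integrable_const_bound[where B=1])
    have "norm (f \<omega>) \<le> 1" if "\<omega> \<in> space P" for \<omega>
      using f01[OF that] by (cases "\<omega> \<in> E1") auto
    then show "AE x in P. norm (f x) \<le> 1" by (intro AE_I2)
  qed (fact fm)
  have Ef: "integral\<^sup>L P f \<le> measure P E1"
  proof -
    have "integral\<^sup>L P f \<le> integral\<^sup>L P (indicator E1)"
      by (rule integral_mono) (use int E1m f01 in \<open>auto intro: integrable_real_indicator simp: emeasure_eq_measure\<close>)
    then show ?thesis using E1m by simp
  qed
  have E0: "0 \<le> integral\<^sup>L P f" using f01 by (intro integral_nonneg_AE AE_I2) auto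
  have "space P - Q \<subseteq> E2"
  proof
    fix x assume "x \<in> space P - Q"
    then have "card (?Ds x) = 0" "x \<in> space P" by (auto simp: Q_def)
    then have "?Ds x = {}" using fin[of x] by simp
    then show "x \<in> E2" using A \<open>x \<in> space P\<close> by (auto simp: E2_def)
  qed
  then have "measure P (space P - Q) \<le> measure P E2" using E2m by (intro finite_measure_mono) auto
  moreover have "measure P (space P - Q) = 1 - measure P Q" using Qm by (simp add: prob_compl)
  ultimately have Qh: "measure P Q \<ge> 1/2" using f2 unfolding FWE2_def E2_def by simp
  have "pFDR1 P A ?Ds = integral\<^sup>L P f / measure P Q" unfolding pFDR1_def f_def Q_def by simp
  also have "\<dots> \<le> integral\<^sup>L P f / (1/2)" using Qh E0 by (intro divide_left_mono) auto
  also have "\<dots> \<le> 2 * measure P E1" using Ef by simp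
  finally show ?thesis unfolding FWE1_def E1_def .
qed

lemma pFDR2_upper:
  assumes P: "prob_space P" and D: "\<And>k. k \<in> {1..K} \<Longrightarrow> Measurable.pred P (D k)"
    and A: "A \<subseteq> {1..K}" "A \<noteq> {1..K}" and f1: "FWE1 P A (Dset K D) \<le> 1/2"
  shows "pFDR2 K P A (Dset K D) \<le> 2 * FWE2 P A (Dset K D)"
proof -
  interpret prob_space P by fact
  let ?Ds = "Dset K D"
  define f where "f = (\<lambda>\<omega>. if real K - real (card (?Ds \<omega>)) \<ge> 1
           then real (card (A - ?Ds \<omega>)) / (real K - real (card (?Ds \<omega>))) else 0)"
  define E1 where "E1 = {\<omega>\<in>space P. ?Ds \<omega> - A \<noteq> {}}"
  define E2 where "E2 = {\<omega>\<in>space P. A - ?Ds \<omega> \<noteq> {}}"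
  define Q where "Q = {\<omega>\<in>space P. real K - real (card (?Ds \<omega>)) \<ge> 1}"
  have fin: "finite (?Ds \<omega>)" for \<omega> by (rule finite_subset[OF Dset_sub]) simp
  have fm: "f \<in> borel_measurable P" unfolding f_def by (rule Dset_fun_meas[OF D])
  have E1m: "E1 \<in> sets P" unfolding E1_def by (rule Dset_set_meas[OF D])
  have E2m: "E2 \<in> sets P" unfolding E2_def by (rule Dset_set_meas[OF D])
  have Qm: "Q \<in> sets P" unfolding Q_def by (rule Dset_set_meas[OF D])
  have f01: "0 \<le> f \<omega> \<and> f \<omega> \<le> indicator E2 \<omega>" if "\<omega> \<in> space P" for \<omega>
  proof (cases "A - ?Ds \<omega> = {}")
    case True
    then have "card (A - ?Ds \<omega>) = 0" by (metis card.empty)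
    then show ?thesis by (simp add: f_def indicator_def)
  next
    case False
    have "card (A - ?Ds \<omega>) \<le> card ({1..K} - ?Ds \<omega>)" using A by (intro card_mono) auto
    also have "\<dots> = K - card (?Ds \<omega>)" using Dset_sub by (subst card_Diff_subset) (auto simp: fin)
    finally have c: "real (card (A - ?Ds \<omega>)) \<le> real K - real (card (?Ds \<omega>))"
      using card_mono[OF _ Dset_sub, of K D \<omega>] by simp
    show ?thesis using False that c by (auto simp: f_def E2_def divide_le_eq_1)
  qed
  have int: "integrable P f"
  proof (rule integrable_const_bound[where B=1])
    have "norm (f \<omega>) \<le> 1" if "\<omega> \<in> space P" for \<omega>
      using f01[OF that] by (cases "\<omega> \<in> E2") auto
    then show "AE x in P. norm (f x) \<le> 1" by (intro AE_I2)
  qed (fact fm)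
  have Ef: "integral\<^sup>L P f \<le> measure P E2"
  proof -
    have "integral\<^sup>L P f \<le> integral\<^sup>L P (indicator E2)"
      by (rule integral_mono) (use int E2m f01 in \<open>auto intro: integrable_real_indicator simp: emeasure_eq_measure\<close>)
    then show ?thesis using E2m by simp
  qed
  have E0: "0 \<le> integral\<^sup>L P f" using f01 by (intro integral_nonneg_AE AE_I2) auto
  have "space P - Q \<subseteq> E1"
  proof
    fix x assume "x \<in> space P - Q"
    then have "card (?Ds x) \<ge> K" "x \<in> space P" by (auto simp: Q_def)
    moreover have "card (?Ds x) \<le> K" using card_mono[OF _ Dset_sub, of K D x] by simp
    ultimately have "?Ds x = {1..K}" using Dset_sub[of K D x] by (intro card_subset_eq) auto
    then show "x \<in> E1" using A \<open>x \<in> space P\<close> by (auto simp: E1_def)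
  qed
  then have "measure P (space P - Q) \<le> measure P E1" using E1m by (intro finite_measure_mono) auto
  moreover have "measure P (space P - Q) = 1 - measure P Q" using Qm by (simp add: prob_compl)
  ultimately have Qh: "measure P Q \<ge> 1/2" using f1 unfolding FWE1_def E1_def by simp
  have "pFDR2 K P A ?Ds = integral\<^sup>L P f / measure P Q" unfolding pFDR2_def f_def Q_def by simp
  also have "\<dots> \<le> integral\<^sup>L P f / (1/2)" using Qh E0 by (intro divide_left_mono) auto
  also have "\<dots> \<le> 2 * measure P E2" using Ef by simp
  finally show ?thesis unfolding FWE2_def E2_def .
qed

lemma pFDR1_lower:
  assumes P: "prob_space P" and D: "\<And>k. k \<in> {1..K} \<Longrightarrow> Measurable.pred P (D k)"
    and K: "K > 0"
  shows "pFDR1 P A (Dset K D) \<ge> FWE1 P A (Dset K D) / real K"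
proof -
  interpret prob_space P by fact
  let ?Ds = "Dset K D"
  define f where "f = (\<lambda>\<omega>. if card (?Ds \<omega>) \<ge> 1 then real (card (?Ds \<omega> - A)) / real (card (?Ds \<omega>)) else 0)"
  define E1 where "E1 = {\<omega>\<in>space P. ?Ds \<omega> - A \<noteq> {}}"
  define Q where "Q = {\<omega>\<in>space P. card (?Ds \<omega>) \<ge> 1}"
  have fin: "finite (?Ds \<omega>)" for \<omega> by (rule finite_subset[OF Dset_sub]) simp
  have fm: "f \<in> borel_measurable P" unfolding f_def by (rule Dset_fun_meas[OF D])
  have E1m: "E1 \<in> sets P" unfolding E1_def by (rule Dset_set_meas[OF D])
  have Qm: "Q \<in> sets P" unfolding Q_def by (rule Dset_set_meas[OF D])
  have f01: "0 \<le> f \<omega> \<and> f \<omega> \<le> 1 \<and> indicator E1 \<omega> / real K \<le> f \<omega>" if "\<omega> \<in> space P" for \<omega>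
  proof (cases "?Ds \<omega> - A = {}")
    case True
    then have "card (?Ds \<omega> - A) = 0" by (metis card.empty)
    then have "f \<omega> = 0" by (simp add: f_def)
    moreover have "\<omega> \<notin> E1" using True by (simp add: E1_def)
    ultimately show ?thesis by simp
  next
    case False
    then have c1: "card (?Ds \<omega> - A) \<le> card (?Ds \<omega>)" using fin by (intro card_mono) auto
    have c2: "card (?Ds \<omega> - A) \<ge> 1" using False fin by (simp add: Suc_le_eq card_gt_0_iff)
    have c3: "card (?Ds \<omega>) \<le> K" using card_mono[OF _ Dset_sub, of K D \<omega>] by simp
    have "1 / real K \<le> 1 / real (card (?Ds \<omega>))" using c1 c2 c3 by (intro divide_left_mono) auto
    also have "\<dots> \<le> real (card (?Ds \<omega> - A)) / real (card (?Ds \<omega>))"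
      using c2 by (intro divide_right_mono) auto
    finally show ?thesis using False that c1 c2 by (auto simp: f_def E1_def divide_le_eq_1)
  qed
  have int: "integrable P f"
  proof (rule integrable_const_bound[where B=1])
    show "AE x in P. norm (f x) \<le> 1" using f01 by (intro AE_I2) auto
  qed (fact fm)
  have Ef: "integral\<^sup>L P f \<ge> measure P E1 / real K"
  proof -
    have "integral\<^sup>L P (\<lambda>\<omega>. indicator E1 \<omega> / real K) \<le> integral\<^sup>L P f"
      by (rule integral_mono) (use int E1m f01 in \<open>auto intro: integrable_real_indicator simp: emeasure_eq_measure\<close>)
    then show ?thesis using E1m by simp
  qed
  have E0: "0 \<le> integral\<^sup>L P f" using f01 by (intro integral_nonneg_AE AE_I2) auto
  have sub: "E1 \<subseteq> Q" using fin by (auto simp: E1_def Q_def Suc_le_eq card_gt_0_iff)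
  show ?thesis
  proof (cases "measure P Q = 0")
    case True
    then have "measure P E1 = 0" using sub Qm E1m
      by (metis finite_measure_mono measure_nonneg order_antisym)
    then show ?thesis unfolding FWE1_def pFDR1_def E1_def
      using True unfolding Q_def by simp
  next
    case False
    then have q: "0 < measure P Q" "measure P Q \<le> 1" by (auto simp: zero_less_measure_iff)
    have "measure P E1 / real K \<le> integral\<^sup>L P f" by (fact Ef)
    also have "\<dots> \<le> integral\<^sup>L P f / measure P Q" using q E0 by (simp add: le_divide_eq mult_left_le)
    finally show ?thesis unfolding FWE1_def pFDR1_def E1_def f_def Q_def .
  qed
qed

lemma pFDR2_lower:
  assumes P: "prob_space P" and D: "\<And>k. k \<in> {1..K} \<Longrightarrow> Measurable.pred P (D k)"
    and K: "K > 0" and A: "A \<subseteq> {1..K}"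
  shows "pFDR2 K P A (Dset K D) \<ge> FWE2 P A (Dset K D) / real K"
proof -
  interpret prob_space P by fact
  let ?Ds = "Dset K D"
  define f where "f = (\<lambda>\<omega>. if real K - real (card (?Ds \<omega>)) \<ge> 1
           then real (card (A - ?Ds \<omega>)) / (real K - real (card (?Ds \<omega>))) else 0)"
  define E2 where "E2 = {\<omega>\<in>space P. A - ?Ds \<omega> \<noteq> {}}"
  define Q where "Q = {\<omega>\<in>space P. real K - real (card (?Ds \<omega>)) \<ge> 1}"
  have fin: "finite (?Ds \<omega>)" for \<omega> by (rule finite_subset[OF Dset_sub]) simp
  have fm: "f \<in> borel_measurable P" unfolding f_def by (rule Dset_fun_meas[OF D])
  have E2m: "E2 \<in> sets P" unfolding E2_def by (rule Dset_set_meas[OF D])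
  have Qm: "Q \<in> sets P" unfolding Q_def by (rule Dset_set_meas[OF D])
  have ck: "card (?Ds \<omega>) \<le> K" for \<omega> using card_mono[OF _ Dset_sub, of K D \<omega>] by simp
  have f01: "0 \<le> f \<omega> \<and> f \<omega> \<le> 1 \<and> indicator E2 \<omega> / real K \<le> f \<omega>" if "\<omega> \<in> space P" for \<omega>
  proof (cases "A - ?Ds \<omega> = {}")
    case True
    then have "card (A - ?Ds \<omega>) = 0" by (metis card.empty)
    then have "f \<omega> = 0" by (simp add: f_def)
    moreover have "\<omega> \<notin> E2" using True by (simp add: E2_def)
    ultimately show ?thesis by simp
  next
    case False
    have "card (A - ?Ds \<omega>) \<le> card ({1..K} - ?Ds \<omega>)" using A by (intro card_mono) auto
    also have "\<dots> = K - card (?Ds \<omega>)" using Dset_sub by (subst card_Diff_subset) (auto simp: fin)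
    finally have c1: "real (card (A - ?Ds \<omega>)) \<le> real K - real (card (?Ds \<omega>))"
      using ck[of \<omega>] by simp
    have c2: "card (A - ?Ds \<omega>) \<ge> 1" using False A by (simp add: Suc_le_eq card_gt_0_iff finite_subset)
    have c4: "real K - real (card (?Ds \<omega>)) \<le> real K" by simp
    have "1 / real K \<le> 1 / (real K - real (card (?Ds \<omega>)))" using c1 c2 c4 by (intro divide_left_mono) auto
    also have "\<dots> \<le> real (card (A - ?Ds \<omega>)) / (real K - real (card (?Ds \<omega>)))"
      using c1 c2 by (intro divide_right_mono) auto
    finally show ?thesis using False that c1 c2 by (auto simp: f_def E2_def divide_le_eq_1)
  qed
  have int: "integrable P f"
  proof (rule integrable_const_bound[where B=1])
    show "AE x in P. norm (f x) \<le> 1" using f01 by (intro AE_I2) auto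
  qed (fact fm)
  have Ef: "integral\<^sup>L P f \<ge> measure P E2 / real K"
  proof -
    have "integral\<^sup>L P (\<lambda>\<omega>. indicator E2 \<omega> / real K) \<le> integral\<^sup>L P f"
      by (rule integral_mono) (use int E2m f01 in \<open>auto intro: integrable_real_indicator simp: emeasure_eq_measure\<close>)
    then show ?thesis using E2m by simp
  qed
  have E0: "0 \<le> integral\<^sup>L P f" using f01 by (intro integral_nonneg_AE AE_I2) auto
  have sub: "E2 \<subseteq> Q"
  proof
    fix x assume x: "x \<in> E2"
    then have "?Ds x \<subset> {1..K}" using A Dset_sub[of K D x] by (auto simp: E2_def)
    then have "card (?Ds x) < card {1..K}" by (rule psubset_card_mono[OF finite_atLeastAtMost])
    then have "card (?Ds x) < K" by simp
    then show "x \<in> Q" using x by (auto simp: Q_def E2_def)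
  qed
  show ?thesis
  proof (cases "measure P Q = 0")
    case True
    then have "measure P E2 = 0" using sub Qm E2m
      by (metis finite_measure_mono measure_nonneg order_antisym)
    then show ?thesis unfolding FWE2_def pFDR2_def E2_def
      using True unfolding Q_def by simp
  next
    case False
    then have q: "0 < measure P Q" "measure P Q \<le> 1" by (auto simp: zero_less_measure_iff)
    have "measure P E2 / real K \<le> integral\<^sup>L P f" by (fact Ef)
    also have "\<dots> \<le> integral\<^sup>L P f / measure P Q" using q E0 by (simp add: le_divide_eq mult_left_le)
    finally show ?thesis unfolding FWE2_def pFDR2_def E2_def f_def Q_def .
  qed
qed

lemma sorted_nth_le_iff:
  fixes s :: "real list"
  assumes "sorted s" "m < length s"
  shows "s ! m \<le> t \<longleftrightarrow> m < length (filter (\<lambda>x. x \<le> t) s)"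
  using assms
proof (induction s arbitrary: m)
  case Nil then show ?case by simp
next
  case (Cons x s)
  have xs: "\<forall>y\<in>set s. x \<le> y" "sorted s" using Cons.prems(1) by auto
  show ?case
  proof (cases m)
    case 0
    show ?thesis
    proof (cases "x \<le> t")
      case True then show ?thesis using 0 by simp
    next
      case False
      then have "filter (\<lambda>x. x \<le> t) s = []" using xs by (auto simp: filter_empty_conv)
      then show ?thesis using 0 False by simp
    qed
  next
    case (Suc m')
    have m': "m' < length s" using Cons.prems Suc by simp
    show ?thesis
    proof (cases "x \<le> t")
      case True then show ?thesis using Suc Cons.IH[OF xs(2) m'] by simp
    next
      case False
      then have "filter (\<lambda>x. x \<le> t) s = []" using xs by (auto simp: filter_empty_conv)
      moreover have "s ! m' \<ge> x" using xs m' by auto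
      ultimately show ?thesis using Suc False by simp
    qed
  qed
qed

lemma length_filter_sort: "length (filter P (sort xs)) = length (filter P (xs :: real list))"
  by (metis mset_filter mset_sort size_mset)

lemma length_filter_upt:
  "length (filter P (map g [1..<K+1])) = card {i\<in>{1..K}. P (g i)}"
proof -
  have "length (filter P (map g [1..<K+1])) = length (filter (P \<circ> g) [1..<K+1])"
    by (simp add: filter_map)
  also have "\<dots> = card (set (filter (P \<circ> g) [1..<K+1]))"
    by (metis distinct_card distinct_filter distinct_upt)
  also have "set (filter (P \<circ> g) [1..<K+1]) = {i\<in>{1..K}. P (g i)}" by auto
  finally show ?thesis .
qed

lemma ostat_le_iff:
  assumes "1 \<le> j" "j \<le> K"
  shows "ostat K g j \<le> t \<longleftrightarrow> K - j < card {i\<in>{1..K}. g i \<le> t}"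
proof -
  let ?xs = "map g [1..<K+1]"
  have len: "length (sort ?xs) = K" by simp
  have "ostat K g j = sort ?xs ! (K - j)"
    unfolding ostat_def using assms by (simp add: rev_nth len Suc_diff_le)
  then have "ostat K g j \<le> t \<longleftrightarrow> K - j < length (filter (\<lambda>x. x \<le> t) (sort ?xs))"
    using sorted_nth_le_iff[of "sort ?xs" "K - j" t] assms by simp
  also have "\<dots> \<longleftrightarrow> K - j < card {i\<in>{1..K}. g i \<le> t}"
    by (simp only: length_filter_sort length_filter_upt)
  finally show ?thesis .
qed

lemma nth_beyond: "length xs \<le> n \<Longrightarrow> xs ! n = [] ! (n - length xs)"
  by (induction xs arbitrary: n) (auto simp: nth_Cons split: nat.splits)

lemma card_pred_meas:
  assumes "finite I" "\<And>i. i \<in> I \<Longrightarrow> Measurable.pred N (Pr i)"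
  shows "(\<lambda>\<omega>. card {i\<in>I. Pr i \<omega>}) \<in> N \<rightarrow>\<^sub>M count_space UNIV"
  using assms
proof (induction I rule: finite_induct)
  case empty then show ?case by simp
next
  case (insert a I)
  have eq: "(\<lambda>\<omega>. card {i\<in>insert a I. Pr i \<omega>}) =
        (\<lambda>\<omega>. if Pr a \<omega> then Suc (card {i\<in>I. Pr i \<omega>}) else card {i\<in>I. Pr i \<omega>})"
  proof
    fix \<omega>
    have f: "finite {i\<in>I. Pr i \<omega>}" using insert(1) by simp
    show "card {i\<in>insert a I. Pr i \<omega>} = (if Pr a \<omega> then Suc (card {i\<in>I. Pr i \<omega>}) else card {i\<in>I. Pr i \<omega>})"
    proof (cases "Pr a \<omega>")
      case True
      then have "{i\<in>insert a I. Pr i \<omega>} = insert a {i\<in>I. Pr i \<omega>}" by auto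
      then show ?thesis using True f insert(2) by simp
    next
      case False
      then have "{i\<in>insert a I. Pr i \<omega>} = {i\<in>I. Pr i \<omega>}" by auto
      then show ?thesis using False by simp
    qed
  qed
  have c: "(\<lambda>\<omega>. card {i\<in>I. Pr i \<omega>}) \<in> N \<rightarrow>\<^sub>M count_space UNIV"
    using insert by simp
  have p: "{\<omega>\<in>space N. Pr a \<omega>} \<in> sets N" using insert(4)[of a] by (simp add: pred_def)
  show ?case unfolding eq
    by (rule measurable_If[OF measurable_compose[OF c measurable_count_space] c p])
qed


lemma ostat_meas:
  assumes "\<And>j. j \<in> {1..K} \<Longrightarrow> (\<lambda>\<omega>. g j \<omega>) \<in> borel_measurable N"
  shows "(\<lambda>\<omega>. ostat K (\<lambda>j. g j \<omega>) i) \<in> borel_measurable N"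
proof (cases "i - 1 < K")
  case False
  have "ostat K (\<lambda>j. g j \<omega>) i = [] ! (i - 1 - K)" for \<omega>
    unfolding ostat_def using False by (subst nth_beyond) (auto, cases K, auto)
  then show ?thesis by simp
next
  case True
  define j where "j = max 1 i"
  have j: "1 \<le> j" "j \<le> K" using True by (auto simp: j_def)
  have oj: "ostat K f i = ostat K f j" for f unfolding ostat_def j_def by (cases i) auto
  show ?thesis
  proof (rule borel_measurableI_le)
    fix t
    have cm: "(\<lambda>\<omega>. card {ia\<in>{1..K}. g ia \<omega> \<le> t}) \<in> N \<rightarrow>\<^sub>M count_space UNIV"
      by (rule card_pred_meas) (use assms in auto)
    have "(\<lambda>\<omega>. K - j < card {ia\<in>{1..K}. g ia \<omega> \<le> t}) \<in> N \<rightarrow>\<^sub>M count_space UNIV"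
      by (rule measurable_compose[OF cm measurable_count_space])
    then have s: "{\<omega> \<in> space N. K - j < card {ia\<in>{1..K}. g ia \<omega> \<le> t}} \<in> sets N"
      by (rule pred_def[THEN iffD1])
    have eq: "{\<omega> \<in> space N. ostat K (\<lambda>j. g j \<omega>) i \<le> t} = {\<omega> \<in> space N. K - j < card {ia\<in>{1..K}. g ia \<omega> \<le> t}}"
      by (simp only: oj ostat_le_iff[OF j])
    show "{\<omega> \<in> space N. ostat K (\<lambda>j. g j \<omega>) i \<le> t} \<in> sets N" unfolding eq by (rule s)
  qed
qed

lemma hit_meas:
  assumes "\<And>n. Measurable.pred N (P n)"
  shows "(\<lambda>\<omega>. hit (\<lambda>n. P n \<omega>)) \<in> N \<rightarrow>\<^sub>M count_space UNIV"
  unfolding hit_def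
proof (rule measurable_If)
  have "(\<lambda>\<omega>. LEAST n. n \<ge> 1 \<and> P n \<omega>) \<in> N \<rightarrow>\<^sub>M count_space UNIV"
    by (rule measurable_Least) (use assms in measurable)
  then show "(\<lambda>\<omega>. enat (LEAST n. n \<ge> 1 \<and> P n \<omega>)) \<in> N \<rightarrow>\<^sub>M count_space UNIV"
    by (rule measurable_compose[OF _ measurable_count_space])
  show "(\<lambda>\<omega>. \<infinity>) \<in> N \<rightarrow>\<^sub>M count_space UNIV" by simp
  have "Measurable.pred N (\<lambda>\<omega>. \<exists>n. n \<ge> 1 \<and> P n \<omega>)"
    using assms by measurable
  then show "{\<omega> \<in> space N. \<exists>n\<ge>1. P n \<omega>} \<in> sets N" by (rule pred_def[THEN iffD1])
qed

lemma comb2: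
  fixes f :: "'b \<Rightarrow> 'c::countable" and g :: "'b \<Rightarrow> 'd::countable"
  assumes "f \<in> N \<rightarrow>\<^sub>M count_space UNIV" "g \<in> N \<rightarrow>\<^sub>M count_space UNIV"
  shows "(\<lambda>\<omega>. h (f \<omega>) (g \<omega>)) \<in> N \<rightarrow>\<^sub>M count_space UNIV"
proof (rule measurable_compose_countable[where f="\<lambda>x \<omega>. h x (g \<omega>)", OF _ assms(1)])
  fix x show "(\<lambda>\<omega>. h x (g \<omega>)) \<in> N \<rightarrow>\<^sub>M count_space UNIV"
    by (rule measurable_compose[OF assms(2) measurable_count_space])
qed

lemma Lam_meas:
  assumes k: "k \<in> {1..K}"
  shows "(\<lambda>\<omega>. Lam M P0 P1 k n \<omega>) \<in> borel_measurable (joint_space M K)"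
proof -
  have c: "(\<lambda>\<omega>. \<omega> k) \<in> joint_space M K \<rightarrow>\<^sub>M path_space M"
    unfolding joint_space_def by (rule measurable_component_singleton[OF k])
  have t: "trunc n \<in> path_space M \<rightarrow>\<^sub>M trunc_space M n"
    unfolding trunc_def[abs_def] path_space_def trunc_space_def
    by (rule measurable_restrict_subset) simp
  have r: "RN_deriv (trunc_law M n (P0 k)) (trunc_law M n (P1 k)) \<in> borel_measurable (trunc_space M n)"
    using borel_measurable_RN_deriv[of "trunc_law M n (P0 k)" "trunc_law M n (P1 k)"]
    unfolding trunc_law_def by (simp cong: measurable_cong_sets)
  have "(\<lambda>\<omega>. RN_deriv (trunc_law M n (P0 k)) (trunc_law M n (P1 k)) (trunc n (\<omega> k))) \<in> borel_measurable (joint_space M K)"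
    by (rule measurable_compose[OF measurable_compose[OF c t] r])
  then show ?thesis unfolding Lam_def llr_def by measurable
qed

lemma ostat_Lam_meas:
  "(\<lambda>\<omega>. ostat K (\<lambda>j. Lam M P0 P1 j n \<omega>) i) \<in> borel_measurable (joint_space M K)"
  by (rule ostat_meas) (rule Lam_meas)

lemma sprt_D_meas:
  assumes k: "k \<in> {1..K}"
  shows "Measurable.pred (joint_space M K) (sprt_D M P0 P1 a b k)"
proof -
  note Lm[measurable] = Lam_meas[OF k, of M P0 P1]
  have T: "sprt_T M P0 P1 a b k \<in> joint_space M K \<rightarrow>\<^sub>M count_space UNIV"
    unfolding sprt_T_def[abs_def] by (rule hit_meas) measurable
  have "(\<lambda>\<omega>. (\<lambda>e \<omega>. case e of enat n \<Rightarrow> Lam M P0 P1 k n \<omega> \<ge> a | \<infinity> \<Rightarrow> False) (sprt_T M P0 P1 a b k \<omega>) \<omega>)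
        \<in> joint_space M K \<rightarrow>\<^sub>M count_space UNIV"
  proof (rule measurable_compose_countable[OF _ T])
    fix e :: enat
    show "(\<lambda>\<omega>. case e of enat n \<Rightarrow> Lam M P0 P1 k n \<omega> \<ge> a | \<infinity> \<Rightarrow> False) \<in> joint_space M K \<rightarrow>\<^sub>M count_space UNIV"
      by (cases e) simp_all
  qed
  then show ?thesis unfolding sprt_D_def[abs_def] by simp
qed

lemma pred_le_real:
  fixes f g :: "'b \<Rightarrow> real"
  assumes "f \<in> borel_measurable N" "g \<in> borel_measurable N"
  shows "Measurable.pred N (\<lambda>\<omega>. f \<omega> \<le> g \<omega>)"
  unfolding pred_def by (rule borel_measurable_le[OF assms])


definition OL where "OL M P0 P1 K n i \<omega> = ostat K (\<lambda>j. Lam M P0 P1 j n \<omega>) i"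

lemma OL_meas[measurable]: "OL M P0 P1 K n i \<in> borel_measurable (joint_space M K)"
  unfolding OL_def[abs_def] by (rule ostat_Lam_meas)

lemma hat_D_meas:
  assumes k: "k \<in> {1..K}"
  shows "Measurable.pred (joint_space M K) (hat_D M P0 P1 K l u a b c d k)"
proof -
  note Lm[measurable] = Lam_meas[OF k, of M P0 P1]
  have T1: "hat_T1 M P0 P1 K l u a b c d k \<in> joint_space M K \<rightarrow>\<^sub>M count_space UNIV"
    unfolding hat_T1_def[abs_def] OL_def[symmetric] by (cases "l = u") (simp_all, (rule hit_meas, rule pred_le_real, measurable, measurable)+)
  have T2: "hat_T2 M P0 P1 K l u a b c d k \<in> joint_space M K \<rightarrow>\<^sub>M count_space UNIV"
    unfolding hat_T2_def[abs_def] OL_def[symmetric] by (cases "l = u") (simp_all, (rule hit_meas, rule pred_le_real, measurable, measurable)+)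
  have "(\<lambda>\<omega>. (\<lambda>x y. min x y = x) (hat_T1 M P0 P1 K l u a b c d k \<omega>) (hat_T2 M P0 P1 K l u a b c d k \<omega>))
     \<in> joint_space M K \<rightarrow>\<^sub>M count_space UNIV"
    by (rule comb2[OF T1 T2])
  then show ?thesis unfolding hat_D_def[abs_def] by simp
qed

definition NP where "NP M P0 P1 K n \<omega> = npos K (\<lambda>j. Lam M P0 P1 j n \<omega>)"

lemma NP_meas: "NP M P0 P1 K n \<in> joint_space M K \<rightarrow>\<^sub>M count_space UNIV"
proof -
  have "(\<lambda>\<omega>. card {k\<in>{1..K}. 0 < Lam M P0 P1 k n \<omega>}) \<in> joint_space M K \<rightarrow>\<^sub>M count_space UNIV"
  proof (rule card_pred_meas)
    fix k assume k: "k \<in> {1..K}"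
    note Lm[measurable] = Lam_meas[OF k, of M P0 P1]
    show "Measurable.pred (joint_space M K) (\<lambda>\<omega>. 0 < Lam M P0 P1 k n \<omega>)" by measurable
  qed simp
  then show ?thesis unfolding NP_def[abs_def] npos_def .
qed

lemma NP_pred: "Measurable.pred (joint_space M K) (\<lambda>\<omega>. Q (NP M P0 P1 K n \<omega>))"
  by (rule measurable_compose[OF NP_meas measurable_count_space])

lemma top_pred:
  assumes k: "k \<in> {1..K}"
  shows "Measurable.pred (joint_space M K) (\<lambda>\<omega>. k \<in> top K (\<lambda>j. Lam M P0 P1 j n \<omega>) i)"
proof -
  have "Measurable.pred (joint_space M K) (\<lambda>\<omega>. OL M P0 P1 K n i \<omega> \<le> Lam M P0 P1 k n \<omega>)"
    by (rule pred_le_real) (measurable, rule Lam_meas[OF k])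
  then show ?thesis using k unfolding top_def OL_def by simp
qed

lemma check_T_meas:
  "check_T M P0 P1 K l u a b c d \<in> joint_space M K \<rightarrow>\<^sub>M count_space UNIV"
proof (cases "l = u")
  case True
  show ?thesis unfolding check_T_def[abs_def] Let_def OL_def[symmetric] using True
    by simp (rule hit_meas, rule pred_intros_logic(3); rule pred_le_real; measurable)
next
  case False
  have A: "(\<lambda>\<omega>. hit (\<lambda>n. OL M P0 P1 K n (l + 1) \<omega> \<le> min (-b) (-c + OL M P0 P1 K n l \<omega>)))
      \<in> joint_space M K \<rightarrow>\<^sub>M count_space UNIV"
    by (rule hit_meas, rule pred_le_real, measurable, measurable)
  have C: "(\<lambda>\<omega>. hit (\<lambda>n. max a (d + OL M P0 P1 K n (u + 1) \<omega>) \<le> OL M P0 P1 K n u \<omega>))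
      \<in> joint_space M K \<rightarrow>\<^sub>M count_space UNIV"
    by (rule hit_meas, rule pred_le_real, measurable, measurable)
  have B: "(\<lambda>\<omega>. hit (\<lambda>n. (\<forall>k\<in>{1..K}. Lam M P0 P1 k n \<omega> \<notin> {-b<..<a}) \<and> l \<le> NP M P0 P1 K n \<omega> \<and> NP M P0 P1 K n \<omega> \<le> u))
      \<in> joint_space M K \<rightarrow>\<^sub>M count_space UNIV"
  proof (rule hit_meas)
    fix n
    have p1: "Measurable.pred (joint_space M K) (\<lambda>\<omega>. \<forall>k\<in>{1..K}. Lam M P0 P1 k n \<omega> \<notin> {-b<..<a})"
    proof (rule pred_intros_finite(3))
      fix k assume k: "k \<in> {1..K}"
      note Lm[measurable] = Lam_meas[OF k, of M P0 P1]
      show "Measurable.pred (joint_space M K) (\<lambda>\<omega>. Lam M P0 P1 k n \<omega> \<notin> {-b<..<a})" by measurable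
    qed simp
    have p2: "Measurable.pred (joint_space M K) (\<lambda>\<omega>. l \<le> NP M P0 P1 K n \<omega> \<and> NP M P0 P1 K n \<omega> \<le> u)"
      by (rule NP_pred)
    show "Measurable.pred (joint_space M K) (\<lambda>\<omega>. (\<forall>k\<in>{1..K}. Lam M P0 P1 k n \<omega> \<notin> {-b<..<a}) \<and> l \<le> NP M P0 P1 K n \<omega> \<and> NP M P0 P1 K n \<omega> \<le> u)"
      using pred_intros_logic(3)[OF p1 p2] by simp
  qed
  have "(\<lambda>\<omega>. min (hit (\<lambda>n. OL M P0 P1 K n (l + 1) \<omega> \<le> min (-b) (-c + OL M P0 P1 K n l \<omega>)))
     (min (hit (\<lambda>n. (\<forall>k\<in>{1..K}. Lam M P0 P1 k n \<omega> \<notin> {-b<..<a}) \<and> l \<le> NP M P0 P1 K n \<omega> \<and> NP M P0 P1 K n \<omega> \<le> u))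
          (hit (\<lambda>n. max a (d + OL M P0 P1 K n (u + 1) \<omega>) \<le> OL M P0 P1 K n u \<omega>))))
      \<in> joint_space M K \<rightarrow>\<^sub>M count_space UNIV"
    by (rule comb2[OF A comb2[OF B C]])
  then show ?thesis unfolding check_T_def[abs_def] Let_def OL_def NP_def using False by simp
qed

lemma check_D_meas:
  assumes k: "k \<in> {1..K}"
  shows "Measurable.pred (joint_space M K) (check_D M P0 P1 K l u a b c d k)"
proof -
  define F where "F = (\<lambda>e \<omega>. case e of enat n \<Rightarrow> (let L = (\<lambda>j. Lam M P0 P1 j n \<omega>) in
                   if l = u then k \<in> top K L l
                   else k \<in> top K L (min (max (npos K L) l) u))
      | \<infinity> \<Rightarrow> False)"
  have "(\<lambda>\<omega>. F (check_T M P0 P1 K l u a b c d \<omega>) \<omega>) \<in> joint_space M K \<rightarrow>\<^sub>M count_space UNIV"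
  proof (rule measurable_compose_countable[OF _ check_T_meas])
    fix e :: enat
    show "F e \<in> joint_space M K \<rightarrow>\<^sub>M count_space UNIV"
    proof (cases e)
      case (enat n)
      show ?thesis
      proof (cases "l = u")
        case True
        then show ?thesis unfolding F_def enat using top_pred[OF k] by simp
      next
        case False
        have "(\<lambda>\<omega>. (\<lambda>i \<omega>. k \<in> top K (\<lambda>j. Lam M P0 P1 j n \<omega>) i) (min (max (NP M P0 P1 K n \<omega>) l) u) \<omega>)
            \<in> joint_space M K \<rightarrow>\<^sub>M count_space UNIV"
        proof (rule measurable_compose_countable[OF top_pred[OF k]])
          show "(\<lambda>\<omega>. min (max (NP M P0 P1 K n \<omega>) l) u) \<in> joint_space M K \<rightarrow>\<^sub>M count_space UNIV"
            by (rule measurable_compose[OF NP_meas measurable_count_space])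
        qed
        then show ?thesis unfolding F_def enat NP_def Let_def using False by simp
      qed
    next
      case infinity
      then show ?thesis unfolding F_def by simp
    qed
  qed
  then show ?thesis unfolding check_D_def[abs_def] F_def .
qed

lemma sets_PA:
  assumes "stream_model M K P0 P1"
  shows "sets (PA K P0 P1 A) = sets (joint_space M K)"
  unfolding PA_def joint_space_def
  by (rule sets_PiM_cong) (use assms in \<open>auto simp: stream_model_def\<close>)

lemma prob_PA:
  assumes "stream_model M K P0 P1"
  shows "prob_space (PA K P0 P1 A)"
  unfolding PA_def
  by (rule prob_space_PiM) (use assms in \<open>auto simp: stream_model_def\<close>)

lemma pred_PA:
  assumes "stream_model M K P0 P1" "Measurable.pred (joint_space M K) X"
  shows "Measurable.pred (PA K P0 P1 A) X"
  using assms(2) measurable_cong_sets[OF sets_PA[OF assms(1), symmetric] refl] by blast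

lemma filt_sets: "sets (filt M K n) \<subseteq> sets (joint_space M K)"
proof -
  have t: "trunc n \<in> path_space M \<rightarrow>\<^sub>M trunc_space M n"
    unfolding trunc_def[abs_def] path_space_def trunc_space_def
    by (rule measurable_restrict_subset) simp
  have "(\<lambda>\<omega>. restrict (\<lambda>k. trunc n (\<omega> k)) {1..K}) \<in> joint_space M K \<rightarrow>\<^sub>M PiM {1..K} (\<lambda>_. trunc_space M n)"
  proof (rule measurable_restrict)
    fix k :: nat assume k: "k \<in> {1..K}"
    have c: "(\<lambda>\<omega>. \<omega> k) \<in> joint_space M K \<rightarrow>\<^sub>M path_space M"
      unfolding joint_space_def by (rule measurable_component_singleton[OF k])
    show "(\<lambda>\<omega>. trunc n (\<omega> k)) \<in> joint_space M K \<rightarrow>\<^sub>M trunc_space M n"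
      by (rule measurable_compose[OF c t])
  qed
  then show ?thesis unfolding filt_def measurable_iff_sets by blast
qed

definition fmap :: "nat \<Rightarrow> nat \<Rightarrow> 'a outcome \<Rightarrow> 'a outcome" where
  "fmap K n \<omega> = restrict (\<lambda>k. trunc n (\<omega> k)) {1..K}"

lemma fmap_meas: "fmap K n \<in> joint_space M K \<rightarrow>\<^sub>M PiM {1..K} (\<lambda>_. trunc_space M n)"
proof -
  have t: "trunc n \<in> path_space M \<rightarrow>\<^sub>M trunc_space M n"
    unfolding trunc_def[abs_def] path_space_def trunc_space_def
    by (rule measurable_restrict_subset) simp
  show ?thesis unfolding fmap_def[abs_def]
  proof (rule measurable_restrict)
    fix k :: nat assume k: "k \<in> {1..K}"
    have c: "(\<lambda>\<omega>. \<omega> k) \<in> joint_space M K \<rightarrow>\<^sub>M path_space M"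
      unfolding joint_space_def by (rule measurable_component_singleton[OF k])
    show "(\<lambda>\<omega>. trunc n (\<omega> k)) \<in> joint_space M K \<rightarrow>\<^sub>M trunc_space M n"
      by (rule measurable_compose[OF c t])
  qed
qed

lemma filt_mono:
  assumes ij: "i \<le> j"
  shows "sets (filt M K i) \<subseteq> sets (filt M K j)"
proof
  let ?\<Omega> = "space (joint_space M K)"
  let ?Ni = "PiM {1..K} (\<lambda>_. trunc_space M i)"
  let ?Nj = "PiM {1..K} (\<lambda>_. trunc_space M j)"
  define g where "g = (\<lambda>x::'a outcome. restrict (\<lambda>k. restrict (x k) {1..i}) {1..K})"
  have gm: "g \<in> ?Nj \<rightarrow>\<^sub>M ?Ni"
    unfolding g_def
  proof (rule measurable_restrict)
    fix k :: nat assume k: "k \<in> {1..K}"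
    have c: "(\<lambda>x. x k) \<in> ?Nj \<rightarrow>\<^sub>M trunc_space M j"
      by (rule measurable_component_singleton[OF k])
    have r: "(\<lambda>f. restrict f {1..i}) \<in> trunc_space M j \<rightarrow>\<^sub>M trunc_space M i"
      unfolding trunc_space_def by (rule measurable_restrict_subset) (use ij in auto)
    show "(\<lambda>x. restrict (x k) {1..i}) \<in> ?Nj \<rightarrow>\<^sub>M trunc_space M i"
      by (rule measurable_compose[OF c r])
  qed
  have fg: "fmap K i \<omega> = g (fmap K j \<omega>)" for \<omega>
    unfolding fmap_def g_def trunc_def using ij by (auto simp: restrict_def fun_eq_iff)
  have fj: "fmap K j \<omega> \<in> space ?Nj" if "\<omega> \<in> ?\<Omega>" for \<omega>
    using measurable_space[OF fmap_meas that] .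
  have fe: "filt M K n = vimage_algebra ?\<Omega> (fmap K n) (PiM {1..K} (\<lambda>_. trunc_space M n))" for n
    unfolding filt_def fmap_def[abs_def] by (rule refl)
  have fi: "fmap K i \<in> ?\<Omega> \<rightarrow> space ?Ni" using measurable_space[OF fmap_meas] by blast
  fix X assume "X \<in> sets (filt M K i)"
  then obtain B where B: "B \<in> sets ?Ni" "X = fmap K i -` B \<inter> ?\<Omega>"
    unfolding fe sets_vimage_algebra2[OF fi] by auto
  have gB: "g -` B \<inter> space ?Nj \<in> sets ?Nj" using measurable_sets[OF gm B(1)] .
  have "X = fmap K j -` (g -` B \<inter> space ?Nj) \<inter> ?\<Omega>"
    using B(2) fg fj by auto
  then show "X \<in> sets (filt M K j)"
    unfolding fe using in_vimage_algebra[OF gB] by simp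
qed

lemma filt_filtration: "filtration (space (joint_space M K)) (filt M K)"
proof
  show "space (filt M K i) = space (joint_space M K)" for i
    unfolding filt_def by simp
  show "sets (filt M K i) \<subseteq> sets (filt M K j)" if "i \<le> j" for i j
    by (rule filt_mono[OF that])
qed

lemma proc_pred:
  assumes "is_procedure M K T D" "k \<in> {1..K}"
  shows "Measurable.pred (joint_space M K) (D k)"
proof -
  let ?\<Omega> = "space (joint_space M K)"
  let ?G = "{A. \<forall>t. {\<omega>\<in>A. T k \<omega> \<le> t} \<in> sets (filt M K t)}"
  have p: "Measurable.pred (filtration.pre_sigma ?\<Omega> (filt M K) (T k)) (D k)"
    using assms unfolding is_procedure_def by blast
  have ps: "filtration.pre_sigma ?\<Omega> (filt M K) (T k) = sigma ?\<Omega> ?G"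
    by (rule filtration.pre_sigma_def[OF filt_filtration])
  have sp: "space (sigma ?\<Omega> ?G) = ?\<Omega>" by (rule space_measure_of_conv)
  have sub: "sets (sigma ?\<Omega> ?G) \<subseteq> sets (joint_space M K)"
  proof (cases "?G \<subseteq> Pow ?\<Omega>")
    case True
    have "?G \<subseteq> sets (joint_space M K)"
    proof
      fix A assume A: "A \<in> ?G"
      have "A = (\<Union>t. {\<omega>\<in>A. T k \<omega> \<le> t})" by auto
      also have "\<dots> \<in> sets (joint_space M K)"
        using A filt_sets by blast
      finally show "A \<in> sets (joint_space M K)" .
    qed
    then show ?thesis using True by (simp add: sets_measure_of_conv sets.sigma_sets_subset)
  next
    case False
    then show ?thesis by (simp add: sets_measure_of_conv)
  qed
  have "{\<omega>\<in>?\<Omega>. D k \<omega>} \<in> sets (sigma ?\<Omega> ?G)"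
    using p unfolding ps pred_def sp .
  then show ?thesis unfolding pred_def using sub by blast
qed

theorem proposition8p1:
  fixes M :: "'a measure"
    and P0 P1 :: "nat \<Rightarrow> (nat \<Rightarrow> 'a) measure"
    and K l u :: nat and a b c d :: real
    and Dc :: "nat \<Rightarrow> 'a outcome \<Rightarrow> bool"
  assumes K: "K \<ge> 2"
    and model: "stream_model M K P0 P1"
    and lu: "0 < l" "l \<le> u" "u < K"
    and thr: "a > 0" "b > 0" "c > 0" "d > 0"
    and proc: "Dc = hat_D M P0 P1 K l u a b c d \<or> Dc = sprt_D M P0 P1 a b
               \<or> Dc = check_D M P0 P1 K l u a b c d"
    and fwe: "\<forall>A\<in>Pi_lu K l u. FWE1 (PA K P0 P1 A) A (Dset K Dc) \<le> 1/2
                            \<and> FWE2 (PA K P0 P1 A) A (Dset K Dc) \<le> 1/2"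
  shows "(\<forall>A\<in>Pi_lu K l u.
           pFDR1 (PA K P0 P1 A) A (Dset K Dc) \<le> 2 * FWE1 (PA K P0 P1 A) A (Dset K Dc)
         \<and> pFDR2 K (PA K P0 P1 A) A (Dset K Dc) \<le> 2 * FWE2 (PA K P0 P1 A) A (Dset K Dc))
         \<and> (\<forall>T D. is_procedure M K T D \<longrightarrow> (\<forall>A\<in>Pi_lu K l u.
           pFDR1 (PA K P0 P1 A) A (Dset K D) \<ge> FWE1 (PA K P0 P1 A) A (Dset K D) / real K
         \<and> pFDR2 K (PA K P0 P1 A) A (Dset K D) \<ge> FWE2 (PA K P0 P1 A) A (Dset K D) / real K))"
proof (intro conjI ballI allI impI)
  have Dcm: "Measurable.pred (PA K P0 P1 A) (Dc k)" if k: "k \<in> {1..K}" for k A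
  proof (rule pred_PA[OF model])
    show "Measurable.pred (joint_space M K) (Dc k)"
      using proc by (elim disjE) (simp_all add: hat_D_meas[OF k] sprt_D_meas[OF k] check_D_meas[OF k])
  qed
  fix A assume A: "A \<in> Pi_lu K l u"
  have As: "A \<subseteq> {1..K}" and cA: "l \<le> card A" "card A \<le> u" using A by (auto simp: Pi_lu_def)
  have Ane: "A \<noteq> {}" using cA lu by auto
  have Anf: "A \<noteq> {1..K}" using cA lu by auto
  show "pFDR1 (PA K P0 P1 A) A (Dset K Dc) \<le> 2 * FWE1 (PA K P0 P1 A) A (Dset K Dc)"
    by (rule pFDR1_upper[OF prob_PA[OF model] Dcm Ane]) (use fwe A in auto)
  show "pFDR2 K (PA K P0 P1 A) A (Dset K Dc) \<le> 2 * FWE2 (PA K P0 P1 A) A (Dset K Dc)"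
    by (rule pFDR2_upper[OF prob_PA[OF model] Dcm As Anf]) (use fwe A in auto)
next
  fix T D A assume pr: "is_procedure M K T D" and A: "A \<in> Pi_lu K l u"
  have As: "A \<subseteq> {1..K}" using A by (auto simp: Pi_lu_def)
  have Dm: "Measurable.pred (PA K P0 P1 A) (D k)" if k: "k \<in> {1..K}" for k
    by (rule pred_PA[OF model proc_pred[OF pr k]])
  have K0: "K > 0" using K by simp
  show "pFDR1 (PA K P0 P1 A) A (Dset K D) \<ge> FWE1 (PA K P0 P1 A) A (Dset K D) / real K"
    by (rule pFDR1_lower[OF prob_PA[OF model] Dm K0])
  show "pFDR2 K (PA K P0 P1 A) A (Dset K D) \<ge> FWE2 (PA K P0 P1 A) A (Dset K D) / real K"
    by (rule pFDR2_lower[OF prob_PA[OF model] Dm K0 As])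
qed

end
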